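(* Let $(\mathfrak g,\mathcal F_\bullet\mathfrak g,R)$ be a filtered Rota–Baxter Lie algebra over a field of characteristic zero. Then, as vector spaces, $\widehat U(\mathfrak g)=\varprojlim U(\mathfrak g)/\mathcal F_nU(\mathfrak g)$ coincides with $\widehat U(\mathfrak g_R)=\varprojlim U(\mathfrak g_R)/\mathcal F_nU(\mathfrak g_R)$.
   Context: Filtered Rota–Baxter Lie algebra: a Lie algebra $\mathfrak g$ with subspaces $\mathfrak g=\mathcal F_1\mathfrak g\supset\mathcal F_2\mathfrak g\supset\cdots$, $[\mathcal F_n\mathfrak g,\mathcal F_m\mathfrak g]\subset\mathcal F_{n+m}\mathfrak g$, and linear $R$ with $[R(x),R(y)]=R([R(x),y]+[x,R(y)]+[x,y])$ and $R(\mathcal F_n\mathfrak g)\subset\mathcal F_n\mathfrak g$. $\mathcal R:U(\mathfrak g)\to U(\mathfrak g)$ is the linear map with $\mathcal R(1)=1$, $\mathcal R(x)=R(x)$, $\mathcal R(xh)=R(x)\mathcal R(h)-\mathcal R([R(x),h])$. $U(\mathfrak g_R)$, the universal enveloping algebra of the descendant Lie algebra $(\mathfrak g,[x,y]_R=[R(x),y]+[x,R(y)]+[x,y])$, is identified with the vector space $U(\mathfrak g)$ equipped with product $a\star b=a_{(1)}\mathcal R(a_{(2)})\,b\,S(\mathcal R(a_{(3)}))$. $\mathcal F_0U(\mathfrak g)=\mathcal F_0U(\mathfrak g_R)=U(\mathfrak g)$; for $n\ge1$, $\mathcal F_nU(\mathfrak g)$ is the span of $x_1\cdots x_k$ and $\mathcal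 F_nU(\mathfrak g_R)$ the span of $x_1\star\cdots\star x_k$, over $k\ge1$, $x_i\in\mathcal F_{n_i}\mathfrak g$, $\sum n_i\ge n$. *)

theory Defs
  imports Main "HOL.Vector_Spaces" "HOL-Library.Poly_Mapping"
begin

definition lie_algebra ::
  "('k::field \<Rightarrow> 'g::ab_group_add \<Rightarrow> 'g) \<Rightarrow> ('g \<Rightarrow> 'g \<Rightarrow> 'g) \<Rightarrow> bool" where
  "lie_algebra scale br \<longleftrightarrow>
     vector_space scale \<and>
     (\<forall>x y z. br (x + y) z = br x z + br y z) \<and>
     (\<forall>x y z. br x (y + z) = br x y + br x z) \<and>
     (\<forall>c x y. br (scale c x) y = scale c (br x y)) \<and>
     (\<forall>c x y. br x (scale c y) = scale c (br x y)) \<and>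
     (\<forall>x. br x x = 0) \<and>
     (\<forall>x y z. br x (br y z) + br y (br z x) + br z (br x y) = 0)"

definition lie_filtration ::
  "('k::field \<Rightarrow> 'g::ab_group_add \<Rightarrow> 'g) \<Rightarrow> ('g \<Rightarrow> 'g \<Rightarrow> 'g) \<Rightarrow> (nat \<Rightarrow> 'g set) \<Rightarrow> bool" where
  "lie_filtration scale br F \<longleftrightarrow>
     F 1 = UNIV \<and>
     (\<forall>n\<ge>1. F (Suc n) \<subseteq> F n) \<and>
     (\<forall>n\<ge>1. module.subspace scale (F n)) \<and>
     (\<forall>n\<ge>1. \<forall>m\<ge>1. \<forall>x\<in>F n. \<forall>y\<in>F m. br x y \<in> F (n + m))"

definition rota_baxter_op ::
  "('k::field \<Rightarrow> 'g::ab_group_add \<Rightarrow> 'g) \<Rightarrow> ('g \<Rightarrow> 'g \<Rightarrow> 'g) \<Rightarrow> ('g \<Rightarrow> 'g) \<Rightarrow> bool" where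
  "rota_baxter_op scale br R \<longleftrightarrow>
     (\<forall>x y. R (x + y) = R x + R y) \<and>
     (\<forall>c x. R (scale c x) = scale c (R x)) \<and>
     (\<forall>x y. br (R x) (R y) = R (br (R x) y + br x (R y) + br x y))"

definition filtered_RB_lie_algebra ::
  "('k::field \<Rightarrow> 'g::ab_group_add \<Rightarrow> 'g) \<Rightarrow> ('g \<Rightarrow> 'g \<Rightarrow> 'g) \<Rightarrow> (nat \<Rightarrow> 'g set)
     \<Rightarrow> ('g \<Rightarrow> 'g) \<Rightarrow> bool" where
  "filtered_RB_lie_algebra scale br F R \<longleftrightarrow>
     lie_algebra scale br \<and> lie_filtration scale br F \<and> rota_baxter_op scale br R \<and>
     (\<forall>n\<ge>1. R ` F n \<subseteq> F n)"

datatype 'a word = Word "'a list"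

instantiation word :: (type) monoid_add
begin
definition zero_word :: "'a word" where "zero_word = Word []"
fun plus_word :: "'a word \<Rightarrow> 'a word \<Rightarrow> 'a word" where
  "plus_word (Word xs) (Word ys) = Word (xs @ ys)"
instance
proof
  fix a b c :: "'a word"
  show "a + b + c = a + (b + c)" by (cases a; cases b; cases c) simp
  show "0 + a = a" by (cases a) (simp add: zero_word_def)
  show "a + 0 = a" by (cases a) (simp add: zero_word_def)
qed
end

text \<open>The free associative unital 'k-algebra on the set 'g: finitely supported
'k-linear combinations of words, multiplication = concatenation convolution.\<close>

type_synonym ('g, 'k) freealg = "'g word \<Rightarrow>\<^sub>0 'k"

definition fconst :: "'k::ring_1 \<Rightarrow> ('g, 'k) freealg" where
  "fconst c = Poly_Mapping.single (Word []) c"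

definition fsmult :: "'k::ring_1 \<Rightarrow> ('g, 'k) freealg \<Rightarrow> ('g, 'k) freealg" where
  "fsmult c p = fconst c * p"

definition fword :: "'g list \<Rightarrow> ('g, 'k::ring_1) freealg" where
  "fword xs = Poly_Mapping.single (Word xs) 1"

definition fgen :: "'g \<Rightarrow> ('g, 'k::ring_1) freealg" where
  "fgen x = fword [x]"

definition kspan :: "('g, 'k::ring_1) freealg set \<Rightarrow> ('g, 'k) freealg set" where
  "kspan S = {(\<Sum>v\<in>A. fsmult (c v) v) | A c. finite A \<and> A \<subseteq> S}"

text \<open>The two-sided ideal I defining U(g) = T(g)/I: generated by the relations
making the generators 'k-linear and imposing xy - yx = [x,y].\<close>

definition U_relations ::
  "('k::field \<Rightarrow> 'g \<Rightarrow> 'g) \<Rightarrow> ('g \<Rightarrow> 'g \<Rightarrow> 'g) \<Rightarrow> ('g::ab_group_add, 'k) freealg set" where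
  "U_relations scale br =
     {fgen (x + y) - fgen x - fgen y | x y. True} \<union>
     {fgen (scale c x) - fsmult c (fgen x) | c x. True} \<union>
     {fgen x * fgen y - fgen y * fgen x - fgen (br x y) | x y. True}"

definition U_ideal ::
  "('k::field \<Rightarrow> 'g \<Rightarrow> 'g) \<Rightarrow> ('g \<Rightarrow> 'g \<Rightarrow> 'g) \<Rightarrow> ('g::ab_group_add, 'k) freealg set" where
  "U_ideal scale br = kspan {fword u * r * fword v | u r v. r \<in> U_relations scale br}"

definition weight_ok :: "(nat \<Rightarrow> 'g set) \<Rightarrow> nat \<Rightarrow> 'g list \<Rightarrow> bool" where
  "weight_ok F n xs \<longleftrightarrow> xs \<noteq> [] \<and>
     (\<exists>ns. length ns = length xs \<and> (\<forall>i<length xs. ns ! i \<ge> 1 \<and> xs ! i \<in> F (ns ! i))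
           \<and> sum_list ns \<ge> n)"

text \<open>Representatives in T(g) of F_n U(g) (for n \<ge> 1: span of products x_1 ... x_k).\<close>

definition FU :: "(nat \<Rightarrow> 'g set) \<Rightarrow> nat \<Rightarrow> ('g, 'k::ring_1) freealg set" where
  "FU F n = (if n = 0 then UNIV else kspan {fword xs | xs. weight_ok F n xs})"

text \<open>The product of U(g_R), transported to U(g): for x \<in> g the formula
 a \<star> b = a_(1) R(a_(2)) b S(R(a_(3))) specialises (using
 \<Delta>^2 x = x\<otimes>1\<otimes>1 + 1\<otimes>x\<otimes>1 + 1\<otimes>1\<otimes>x, R(1)=1, S(1)=1, S(y)=-y) to
 x \<star> b = x b + R(x) b - b R(x).  starprod xs = x_1 \<star> (x_2 \<star> (... \<star> x_k)).\<close>

fun starprod :: "('g \<Rightarrow> 'g) \<Rightarrow> 'g list \<Rightarrow> ('g, 'k::ring_1) freealg" where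
  "starprod R [] = 1"
| "starprod R [x] = fgen x"
| "starprod R (x # xs) =
     (let b = starprod R xs in fgen x * b + fgen (R x) * b - b * fgen (R x))"

definition FUR :: "('g \<Rightarrow> 'g) \<Rightarrow> (nat \<Rightarrow> 'g set) \<Rightarrow> nat \<Rightarrow> ('g, 'k::ring_1) freealg set" where
  "FUR R F n = (if n = 0 then UNIV else kspan {starprod R xs | xs. weight_ok F n xs})"

definition set_plus :: "'a::plus set \<Rightarrow> 'a set \<Rightarrow> 'a set" where
  "set_plus A B = {a + b | a b. a \<in> A \<and> b \<in> B}"

text \<open>Inverse limit of the quotients U/V_n, where V_n are subspaces of U = T/I,
 represented by their preimages W_n = V_n + I in T: an element is a sequence of
 cosets c_n \<in> U/V_n (as subsets of T, cosets of W_n) compatible with the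
 projections U/V_{n+1} \<rightarrow> U/V_n.\<close>

definition inv_limit :: "(nat \<Rightarrow> 'a::ab_group_add set) \<Rightarrow> (nat \<Rightarrow> 'a set) set" where
  "inv_limit W = {c. \<forall>n. (\<exists>a. c n = set_plus {a} (W n)) \<and> c (Suc n) \<subseteq> c n}"

definition completion_U ::
  "('k::field \<Rightarrow> 'g \<Rightarrow> 'g) \<Rightarrow> ('g \<Rightarrow> 'g \<Rightarrow> 'g) \<Rightarrow> (nat \<Rightarrow> 'g set)
     \<Rightarrow> (nat \<Rightarrow> ('g::ab_group_add, 'k) freealg set) set" where
  "completion_U scale br F = inv_limit (\<lambda>n. set_plus (FU F n) (U_ideal scale br))"

definition completion_UR ::
  "('k::field \<Rightarrow> 'g \<Rightarrow> 'g) \<Rightarrow> ('g \<Rightarrow> 'g \<Rightarrow> 'g) \<Rightarrow> (nat \<Rightarrow> 'g set) \<Rightarrow> ('g \<Rightarrow> 'g)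
     \<Rightarrow> (nat \<Rightarrow> ('g::ab_group_add, 'k) freealg set) set" where
  "completion_UR scale br F R = inv_limit (\<lambda>n. set_plus (FUR R F n) (U_ideal scale br))"

end

theory Submission
  imports Defs
begin

lemma Word_zero: "(0::'a word) = Word []" by (simp add: zero_word_def)

lemma fword_Cons: "(fword (x # xs) :: ('g,'k::ring_1) freealg) = fgen x * fword xs"
  by (simp add: fword_def fgen_def mult_single)

lemma fword_append: "(fword (xs @ ys) :: ('g,'k::ring_1) freealg) = fword xs * fword ys"
  by (simp add: fword_def mult_single)

lemma fword_Nil: "(fword [] :: ('g,'k::ring_1) freealg) = 1"
  by (simp add: fword_def Word_zero[symmetric])

lemma fgen_comm: "fgen x * fconst c = (fconst c * fgen x :: ('g,'k::ring_1) freealg)"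
  by (simp add: fgen_def fword_def fconst_def mult_single)

lemma fconst_mult: "fconst a * fconst b = (fconst (a*b) :: ('g,'k::ring_1) freealg)"
  by (simp add: fconst_def mult_single)

lemma fsmult_neg1: "fsmult (-1) a = - (a :: ('g,'k::ring_1) freealg)"
  by (simp add: fsmult_def fconst_def single_uminus Word_zero[symmetric])

lemma fsmult_zero: "fsmult 0 a = (0 :: ('g,'k::ring_1) freealg)"
  by (simp add: fsmult_def fconst_def)

lemma fsmult_one: "fsmult 1 a = (a :: ('g,'k::ring_1) freealg)"
  by (simp add: fsmult_def fconst_def Word_zero[symmetric])

definition kclosed :: "('g,'k::ring_1) freealg set \<Rightarrow> bool" where
  "kclosed V \<longleftrightarrow> 0 \<in> V \<and> (\<forall>a\<in>V. \<forall>b\<in>V. a + b \<in> V) \<and> (\<forall>c. \<forall>a\<in>V. fsmult c a \<in> V)"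

lemma kclosed_diff: "kclosed V \<Longrightarrow> a \<in> V \<Longrightarrow> b \<in> V \<Longrightarrow> a - b \<in> V"
  unfolding kclosed_def by (metis diff_conv_add_uminus fsmult_neg1)

lemma kspan_map:
  assumes V: "kclosed V"
    and add: "\<And>a b. f (a + b) = f a + f b"
    and sm: "\<And>c a. f (fsmult c a) = fsmult c (f a)"
    and S: "\<And>s. s \<in> S \<Longrightarrow> f s \<in> V"
    and a: "a \<in> kspan S"
  shows "f a \<in> V"
proof -
  obtain A c where A: "finite A" "A \<subseteq> S" and aeq: "a = (\<Sum>v\<in>A. fsmult (c v) v)"
    using a unfolding kspan_def by blast
  have f0: "f 0 = 0" using add[of 0 0] by simp
  have "f (\<Sum>v\<in>A. fsmult (c v) v) \<in> V" using A
  proof (induction A rule: finite_induct)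
    case empty then show ?case using V f0 by (simp add: kclosed_def)
  next
    case (insert x F)
    then show ?case using V S by (simp add: add sm kclosed_def)
  qed
  then show ?thesis using aeq by simp
qed

lemma kspanE:
  assumes "a \<in> kspan S"
  obtains A c where "finite A" "A \<subseteq> S" "a = (\<Sum>v\<in>A. fsmult (c v) v)"
  using assms unfolding kspan_def by blast

lemma kspanI:
  "finite A \<Longrightarrow> A \<subseteq> S \<Longrightarrow> a = (\<Sum>v\<in>A. fsmult (c v) v) \<Longrightarrow> a \<in> kspan S"
  unfolding kspan_def by blast

lemma kspan_kclosed: "kclosed (kspan S)"
proof -
  have z: "0 \<in> kspan S" by (rule kspanI[of "{}"]) auto
  have ad: "a + b \<in> kspan S" if ha: "a \<in> kspan S" and hb: "b \<in> kspan S" for a b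
  proof -
    obtain A c where A: "finite A" "A \<subseteq> S" and aeq: "a = (\<Sum>v\<in>A. fsmult (c v) v)"
      using ha by (rule kspanE)
    obtain B d where B: "finite B" "B \<subseteq> S" and beq: "b = (\<Sum>v\<in>B. fsmult (d v) v)"
      using hb by (rule kspanE)
    define c' where "c' v = (if v \<in> A then c v else 0)" for v
    define d' where "d' v = (if v \<in> B then d v else 0)" for v
    have "a = (\<Sum>v\<in>A\<union>B. fsmult (c' v) v)"
      unfolding aeq by (rule sum.mono_neutral_cong_left) (auto simp: A B c'_def fsmult_zero)
    moreover have "b = (\<Sum>v\<in>A\<union>B. fsmult (d' v) v)"
      unfolding beq by (rule sum.mono_neutral_cong_left) (auto simp: A B d'_def fsmult_zero)
    ultimately have "a + b = (\<Sum>v\<in>A\<union>B. fsmult (c' v + d' v) v)"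
      by (simp add: sum.distrib[symmetric] fsmult_def fconst_def single_add distrib_right)
    then show ?thesis using A B by (intro kspanI[of "A \<union> B"]) auto
  qed
  have sm: "fsmult e a \<in> kspan S" if ha: "a \<in> kspan S" for a e
  proof -
    obtain A c where A: "finite A" "A \<subseteq> S" and aeq: "a = (\<Sum>v\<in>A. fsmult (c v) v)"
      using ha by (rule kspanE)
    have "fsmult e a = (\<Sum>v\<in>A. fconst e * (fconst (c v) * v))"
      unfolding aeq fsmult_def by (rule sum_distrib_left)
    also have "\<dots> = (\<Sum>v\<in>A. fsmult (e * c v) v)"
      unfolding fsmult_def fconst_mult[symmetric] mult.assoc ..
    finally show ?thesis using A by (intro kspanI[of A]) auto
  qed
  show ?thesis unfolding kclosed_def using z ad sm by blast
qed

lemma kspan_sub: "kclosed V \<Longrightarrow> S \<subseteq> V \<Longrightarrow> kspan S \<subseteq> V"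
  using kspan_map[of V id S] by auto

lemma kspan_base: "s \<in> S \<Longrightarrow> s \<in> kspan S"
  by (rule kspanI[of "{s}" _ _ "\<lambda>_. 1"]) (auto simp add: fsmult_one)

lemma kspan_mono: "S \<subseteq> T \<Longrightarrow> kspan S \<subseteq> kspan T"
  unfolding kspan_def by blast


lemma fword_comm: "fword xs * fconst c = (fconst c * fword xs :: ('g,'k::ring_1) freealg)"
  by (simp add: fword_def fconst_def mult_single)

lemma set_plusI: "a \<in> A \<Longrightarrow> b \<in> B \<Longrightarrow> x = a + b \<Longrightarrow> x \<in> set_plus A B"
  unfolding set_plus_def by blast

lemma set_plusE: "x \<in> set_plus A B \<Longrightarrow> (\<And>a b. a \<in> A \<Longrightarrow> b \<in> B \<Longrightarrow> x = a + b \<Longrightarrow> P) \<Longrightarrow> P"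
  unfolding set_plus_def by blast

lemma kclosed_0: "kclosed V \<Longrightarrow> 0 \<in> V" unfolding kclosed_def by blast
lemma kclosed_add: "kclosed V \<Longrightarrow> a \<in> V \<Longrightarrow> b \<in> V \<Longrightarrow> a + b \<in> V" unfolding kclosed_def by blast
lemma kclosed_sm: "kclosed V \<Longrightarrow> a \<in> V \<Longrightarrow> fsmult c a \<in> V" unfolding kclosed_def by blast

lemma set_plus_kclosed:
  assumes A: "kclosed A" and B: "kclosed B" shows "kclosed (set_plus A B)"
proof -
  have z: "0 \<in> set_plus A B" by (rule set_plusI[OF kclosed_0[OF A] kclosed_0[OF B]]) simp
  have ad: "p + q \<in> set_plus A B" if hp: "p \<in> set_plus A B" and hq: "q \<in> set_plus A B" for p q
  proof -
    obtain a b where 1: "a \<in> A" "b \<in> B" "p = a + b" using hp by (rule set_plusE)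
    obtain a' b' where 2: "a' \<in> A" "b' \<in> B" "q = a' + b'" using hq by (rule set_plusE)
    show ?thesis
      by (rule set_plusI[OF kclosed_add[OF A 1(1) 2(1)] kclosed_add[OF B 1(2) 2(2)]])
        (simp add: 1(3) 2(3) algebra_simps)
  qed
  have sm: "fsmult c p \<in> set_plus A B" if hp: "p \<in> set_plus A B" for p c
  proof -
    obtain a b where 1: "a \<in> A" "b \<in> B" "p = a + b" using hp by (rule set_plusE)
    show ?thesis
      by (rule set_plusI[OF kclosed_sm[OF A 1(1)] kclosed_sm[OF B 1(2)]])
        (simp add: 1(3) fsmult_def distrib_left)
  qed
  show ?thesis unfolding kclosed_def using z ad sm by blast
qed

lemma set_plus_left: "kclosed B \<Longrightarrow> a \<in> A \<Longrightarrow> a \<in> set_plus A B"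
  by (rule set_plusI[OF _ kclosed_0]) auto

lemma set_plus_right: "kclosed A \<Longrightarrow> b \<in> B \<Longrightarrow> b \<in> set_plus A B"
  by (rule set_plusI[OF kclosed_0]) auto

lemma span_map:
  assumes V: "kclosed V"
    and add: "\<And>a b. f (a + b) = f a + f b"
    and sm: "\<And>c a. f (fsmult c a) = fsmult c (f a)"
    and S: "\<And>s. s \<in> S \<Longrightarrow> f s \<in> V"
    and I: "\<And>i. i \<in> I \<Longrightarrow> f i \<in> V"
    and b: "b \<in> set_plus (kspan S) I"
  shows "f b \<in> V"
proof -
  obtain a i where ai: "a \<in> kspan S" "i \<in> I" "b = a + i" using b by (rule set_plusE)
  have fa: "f a \<in> V" by (rule kspan_map[OF V add sm S ai(1)])
  have "f b = f a + f i" using ai(3) add by simp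
  then show ?thesis using kclosed_add[OF V fa I[OF ai(2)]] by simp
qed

lemma I_kclosed: "kclosed (U_ideal scale br)"
  unfolding U_ideal_def by (rule kspan_kclosed)

lemma I_sandwich:
  assumes "i \<in> U_ideal scale br"
  shows "fword ps * i * fword zs \<in> U_ideal scale br"
proof -
  show ?thesis
  proof (rule kspan_map[OF I_kclosed, where f = "\<lambda>a. fword ps * a * fword zs" and a = i])
    show "i \<in> kspan {fword u * r * fword v |u r v. r \<in> U_relations scale br}"
      using assms unfolding U_ideal_def .
  next
    fix a b show "fword ps * (a + b) * fword zs = fword ps * a * fword zs + fword ps * b * fword zs"
      by (simp add: algebra_simps)
  next
    fix c a show "fword ps * fsmult c a * fword zs = fsmult c (fword ps * a * fword zs)"
      unfolding fsmult_def by (simp add: mult.assoc[symmetric] fword_comm)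
  next
    fix s assume "s \<in> {fword u * r * fword v |u r v. r \<in> U_relations scale br}"
    then obtain u r v where s: "s = fword u * r * fword v" "r \<in> U_relations scale br" by blast
    have "fword ps * s * fword zs = fword (ps @ u) * r * fword (v @ zs)"
      unfolding s fword_append by (simp add: mult.assoc)
    then show "fword ps * s * fword zs \<in> U_ideal scale br"
      unfolding U_ideal_def using s(2) by (intro kspan_base) blast
  qed
qed

lemma I_left: "i \<in> U_ideal scale br \<Longrightarrow> fgen x * i \<in> U_ideal scale br"
  using I_sandwich[of i scale br "[x]" "[]"] by (simp add: fword_Nil fgen_def)

lemma I_right: "i \<in> U_ideal scale br \<Longrightarrow> i * fgen x \<in> U_ideal scale br"
  using I_sandwich[of i scale br "[]" "[x]"] by (simp add: fword_Nil fgen_def)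

lemma I_rel: "fgen y * fgen z - fgen z * fgen y - fgen (br y z) \<in> U_ideal scale br"
proof -
  have "fword [] * (fgen y * fgen z - fgen z * fgen y - fgen (br y z)) * fword [] \<in> U_ideal scale br"
    unfolding U_ideal_def by (rule kspan_base, unfold U_relations_def, blast)
  then show ?thesis by (simp add: fword_Nil)
qed

lemma comm_lemma:
  fixes V :: "('g::ab_group_add,'k::field) freealg set"
    and F :: "nat \<Rightarrow> 'g set"
  assumes V: "kclosed V" and IV: "U_ideal scale br \<subseteq> V"
    and brF: "\<And>n m x y. 1 \<le> n \<Longrightarrow> 1 \<le> m \<Longrightarrow> x \<in> F n \<Longrightarrow> y \<in> F m \<Longrightarrow> br x y \<in> F (n+m)"
    and y: "y \<in> F m" "1 \<le> m"
    and xs: "list_all2 (\<lambda>x n. 1 \<le> n \<and> x \<in> F n) xs ns"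
    and ps: "list_all2 (\<lambda>x n. 1 \<le> n \<and> x \<in> F n) ps qs"
    and hyp: "\<And>zs ws. list_all2 (\<lambda>x n. 1 \<le> n \<and> x \<in> F n) zs ws \<Longrightarrow>
       length zs = length ps + length xs \<Longrightarrow> m + sum_list qs + sum_list ns \<le> sum_list ws \<Longrightarrow>
       zs \<noteq> [] \<Longrightarrow> fword zs \<in> V"
  shows "fword ps * (fgen y * fword xs - fword xs * fgen y) \<in> V"
  using xs ps hyp
proof (induction xs ns arbitrary: ps qs rule: list_all2_induct)
  case Nil
  then show ?case using kclosed_0[OF V] by (simp add: fword_Nil)
next
  case (Cons z zs n ns')
  define r :: "('g,'k) freealg" where "r = fgen y * fgen z - fgen z * fgen y - fgen (br y z)"
  have eq: "fword ps * (fgen y * fword (z#zs) - fword (z#zs) * fgen y) =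
     (fword ps * r * fword zs + fword (ps @ br y z # zs)) + fword (ps @ [z]) * (fgen y * fword zs - fword zs * fgen y)"
    unfolding r_def fword_append fword_Cons fword_Nil by (simp add: algebra_simps)
  have t1: "fword ps * r * fword zs \<in> V"
    using IV I_sandwich[OF I_rel] unfolding r_def by blast
  have l2: "list_all2 (\<lambda>x n. 1 \<le> n \<and> x \<in> F n) (ps @ br y z # zs) (qs @ (m + n) # ns')"
  proof (rule list_all2_appendI)
    show "list_all2 (\<lambda>x n. 1 \<le> n \<and> x \<in> F n) ps qs" using Cons.prems(1) .
    have "br y z \<in> F (m + n)" using brF[of m n y z] y Cons.hyps(1) by simp
    moreover have "1 \<le> m + n" using y(2) by simp
    ultimately show "list_all2 (\<lambda>x n. 1 \<le> n \<and> x \<in> F n) (br y z # zs) ((m + n) # ns')"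
      using Cons.hyps(2) by simp
  qed
  have t2: "fword (ps @ br y z # zs) \<in> V"
    by (rule Cons.prems(2)[OF l2]) (use Cons.hyps l2 in \<open>auto dest: list_all2_lengthD\<close>)
  have t3: "fword (ps @ [z]) * (fgen y * fword zs - fword zs * fgen y) \<in> V"
  proof (rule Cons.IH)
    show "list_all2 (\<lambda>x n. 1 \<le> n \<and> x \<in> F n) (ps @ [z]) (qs @ [n])"
      using Cons by (intro list_all2_appendI) auto
  next
    fix zs' ws assume "list_all2 (\<lambda>x n. 1 \<le> n \<and> x \<in> F n) zs' ws"
      "length zs' = length (ps @ [z]) + length zs" "m + sum_list (qs @ [n]) + sum_list ns' \<le> sum_list ws"
      "zs' \<noteq> []"
    then show "fword zs' \<in> V" using Cons.prems(2)[of zs' ws] by simp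
  qed
  show ?case unfolding eq using t1 t2 t3 V by (intro kclosed_add)
qed


lemma weight_ok_iff:
  "weight_ok F n xs \<longleftrightarrow> xs \<noteq> [] \<and> (\<exists>ns. list_all2 (\<lambda>x n. 1 \<le> n \<and> x \<in> F n) xs ns \<and> n \<le> sum_list ns)"
  unfolding weight_ok_def list_all2_conv_all_nth by (auto simp: eq_commute[of "length xs"])

lemma weight_ok_mono: "weight_ok F n xs \<Longrightarrow> k \<le> n \<Longrightarrow> weight_ok F k xs"
  unfolding weight_ok_iff by (meson order_trans)

lemma W_mono:
  "k \<le> n \<Longrightarrow> set_plus (kspan {g xs | xs. weight_ok F n xs}) J \<subseteq> set_plus (kspan {g xs | xs. weight_ok F k xs}) J"
proof -
  assume "k \<le> n"
  then have "kspan {g xs | xs. weight_ok F n xs} \<subseteq> kspan {g xs | xs. weight_ok F k xs}"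
    by (intro kspan_mono) (blast intro: weight_ok_mono)
  then show ?thesis unfolding set_plus_def by blast
qed

lemma fgen_comm2: "fgen x * (fconst c * a) = fconst c * (fgen x * (a :: ('g,'k::ring_1) freealg))"
  by (simp add: mult.assoc[symmetric] fgen_comm)

lemma W_kclosed: "kclosed (set_plus (kspan S) (U_ideal scale br))"
  by (intro set_plus_kclosed kspan_kclosed I_kclosed)

lemma comm_map_I:
  "i \<in> U_ideal scale br \<Longrightarrow> fgen y * i - i * fgen y \<in> U_ideal scale br"
  by (intro kclosed_diff[OF I_kclosed] I_left I_right)

lemma comm_sm:
  "fgen y * fsmult c a - fsmult c a * fgen y = fsmult c (fgen y * a - a * fgen y :: ('g,'k::ring_1) freealg)"
  unfolding fsmult_def by (simp add: algebra_simps fgen_comm2)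

lemma lemmaA:
  fixes F :: "nat \<Rightarrow> 'g::ab_group_add set" and R :: "'g \<Rightarrow> 'g"
    and scale :: "'k::field \<Rightarrow> 'g \<Rightarrow> 'g"
  assumes brF: "\<And>n m x y. 1 \<le> n \<Longrightarrow> 1 \<le> m \<Longrightarrow> x \<in> F n \<Longrightarrow> y \<in> F m \<Longrightarrow> br x y \<in> F (n+m)"
    and RF: "\<And>n x. 1 \<le> n \<Longrightarrow> x \<in> F n \<Longrightarrow> R x \<in> F n"
    and xs: "list_all2 (\<lambda>x n. 1 \<le> n \<and> x \<in> F n) xs ns" and ne: "xs \<noteq> []"
  shows "(starprod R xs :: ('g,'k) freealg)
     \<in> set_plus (kspan {fword xs | xs. weight_ok F (sum_list ns) xs}) (U_ideal scale br)"
  using xs ne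
proof (induction xs ns rule: list_all2_induct)
  case Nil then show ?case by simp
next
  case (Cons x ys m ms)
  let ?W = "\<lambda>k. set_plus (kspan {fword xs | xs. weight_ok F k xs}) (U_ideal scale br) :: ('g,'k) freealg set"
  show ?case
  proof (cases ys)
    case Nil
    have "weight_ok F m [x]" unfolding weight_ok_iff using Cons.hyps(1) by auto
    then have "fword [x] \<in> ?W m" by (intro set_plus_left[OF I_kclosed] kspan_base) blast
    then show ?thesis using Nil Cons.hyps(2) by (simp add: fgen_def)
  next
    case (Cons y zs)
    define b :: "('g,'k) freealg" where "b = starprod R ys"
    define k where "k = sum_list ms"
    have b: "b \<in> ?W k" unfolding b_def k_def using Cons.IH Cons by simp
    have m1: "1 \<le> m" "x \<in> F m" using Cons.hyps(1) by auto
    have L: "fgen x * b \<in> ?W (m + k)"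
    proof (rule span_map[OF W_kclosed _ _ _ _ b, where f = "\<lambda>a. fgen x * a"])
      show "fgen x * (a + c) = fgen x * a + fgen x * c" for a c by (simp add: algebra_simps)
      show "fgen x * fsmult c a = fsmult c (fgen x * a)" for c a
        unfolding fsmult_def by (simp add: fgen_comm2)
      show "fgen x * i \<in> ?W (m + k)" if "i \<in> U_ideal scale br" for i
        using that by (intro set_plus_right[OF kspan_kclosed] I_left)
      show "fgen x * s \<in> ?W (m + k)" if hs: "s \<in> {fword xs | xs. weight_ok F k xs}" for s
      proof -
        obtain us where us: "s = fword us" "weight_ok F k us" using hs by blast
        then obtain ws where "list_all2 (\<lambda>x n. 1 \<le> n \<and> x \<in> F n) us ws" "k \<le> sum_list ws"
          unfolding weight_ok_iff by blast
        then have "weight_ok F (m + k) (x # us)" unfolding weight_ok_iff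
          using m1 by (intro conjI exI[of _ "m # ws"]) auto
        then show ?thesis unfolding us(1) fword_Cons[symmetric]
          by (intro set_plus_left[OF I_kclosed] kspan_base) blast
      qed
    qed
    have C: "fgen (R x) * b - b * fgen (R x) \<in> ?W (m + k)"
    proof (rule span_map[OF W_kclosed _ _ _ _ b, where f = "\<lambda>a. fgen (R x) * a - a * fgen (R x)"])
      show "fgen (R x) * (a + c) - (a + c) * fgen (R x) =
        (fgen (R x) * a - a * fgen (R x)) + (fgen (R x) * c - c * fgen (R x))" for a c
        by (simp add: algebra_simps)
      show "fgen (R x) * fsmult c a - fsmult c a * fgen (R x) = fsmult c (fgen (R x) * a - a * fgen (R x))" for c a
        by (rule comm_sm)
      show "fgen (R x) * i - i * fgen (R x) \<in> ?W (m + k)" if "i \<in> U_ideal scale br" for i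
        using that by (intro set_plus_right[OF kspan_kclosed] comm_map_I)
      show "fgen (R x) * s - s * fgen (R x) \<in> ?W (m + k)" if hs: "s \<in> {fword xs | xs. weight_ok F k xs}" for s
      proof -
        obtain us where us: "s = fword us" "weight_ok F k us" using hs by blast
        then obtain ws where ws: "list_all2 (\<lambda>x n. 1 \<le> n \<and> x \<in> F n) us ws" "k \<le> sum_list ws"
          unfolding weight_ok_iff by blast
        have "fword [] * (fgen (R x) * fword us - fword us * fgen (R x)) \<in> ?W (m + k)"
        proof (rule comm_lemma[OF W_kclosed _ brF RF[OF m1] m1(1) ws(1)])
          show "U_ideal scale br \<subseteq> ?W (m + k)" by (auto intro: set_plus_right[OF kspan_kclosed])
          show "list_all2 (\<lambda>x n. 1 \<le> n \<and> x \<in> F n) [] []" by simp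
          fix zs' ws' assume h: "list_all2 (\<lambda>x n. 1 \<le> n \<and> x \<in> F n) zs' ws'"
            "length zs' = length [] + length us" "m + sum_list [] + sum_list ws \<le> sum_list ws'" "zs' \<noteq> []"
          then have "weight_ok F (m + k) zs'" unfolding weight_ok_iff using ws(2) by auto
          then show "fword zs' \<in> ?W (m + k)"
            by (intro set_plus_left[OF I_kclosed] kspan_base) blast
        qed
        then show ?thesis using us(1) by (simp add: fword_Nil)
      qed
    qed
    have "starprod R (x # ys) = fgen x * b + (fgen (R x) * b - b * fgen (R x))"
      unfolding b_def Cons by (simp add: Let_def)
    moreover have "sum_list (m # ms) = m + k" unfolding k_def by simp
    ultimately show ?thesis using kclosed_add[OF W_kclosed L C] by simp
  qed
qed

lemma lemmaB:
  fixes F :: "nat \<Rightarrow> 'g::ab_group_add set" and R :: "'g \<Rightarrow> 'g"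
    and scale :: "'k::field \<Rightarrow> 'g \<Rightarrow> 'g"
  assumes brF: "\<And>n m x y. 1 \<le> n \<Longrightarrow> 1 \<le> m \<Longrightarrow> x \<in> F n \<Longrightarrow> y \<in> F m \<Longrightarrow> br x y \<in> F (n+m)"
    and RF: "\<And>n x. 1 \<le> n \<Longrightarrow> x \<in> F n \<Longrightarrow> R x \<in> F n"
  shows "length xs = L \<Longrightarrow> list_all2 (\<lambda>x n. 1 \<le> n \<and> x \<in> F n) xs ns \<Longrightarrow> xs \<noteq> [] \<Longrightarrow>
     (fword xs :: ('g,'k) freealg)
     \<in> set_plus (kspan {starprod R xs | xs. weight_ok F (sum_list ns) xs}) (U_ideal scale br)"
proof (induction L arbitrary: xs ns rule: less_induct)
  case (less L)
  let ?W = "\<lambda>k. set_plus (kspan {starprod R xs | xs. weight_ok F k xs}) (U_ideal scale br) :: ('g,'k) freealg set"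
  obtain x ys where xs: "xs = x # ys" using less.prems(3) by (cases xs) auto
  obtain m ms where ns: "ns = m # ms" and m1: "1 \<le> m" "x \<in> F m"
    and ms: "list_all2 (\<lambda>x n. 1 \<le> n \<and> x \<in> F n) ys ms"
    using less.prems(2) unfolding xs by (auto simp: list_all2_Cons1)
  show ?case
  proof (cases "ys = []")
    case True
    have "weight_ok F m [x]" unfolding weight_ok_iff using m1 by auto
    then have "starprod R [x] \<in> ?W m" by (intro set_plus_left[OF I_kclosed] kspan_base) blast
    then show ?thesis using True ms unfolding xs ns by (simp add: fgen_def)
  next
    case False
    define k where "k = sum_list ms"
    have b: "fword ys \<in> ?W k" unfolding k_def
      using less.IH[of "length ys" ys ms] ms False less.prems(1) unfolding xs by simp
    define st :: "('g,'k) freealg \<Rightarrow> ('g,'k) freealg" where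
      "st a = fgen x * a + fgen (R x) * a - a * fgen (R x)" for a
    have S1: "st (fword ys) \<in> ?W (m + k)"
    proof (rule span_map[OF W_kclosed _ _ _ _ b, where f = st])
      show "st (a + c) = st a + st c" for a c unfolding st_def by (simp add: algebra_simps)
      show "st (fsmult c a) = fsmult c (st a)" for c a
        unfolding st_def fsmult_def by (simp add: algebra_simps fgen_comm2)
      show "st i \<in> ?W (m + k)" if hi: "i \<in> U_ideal scale br" for i
        unfolding st_def using hi
        by (intro set_plus_right[OF kspan_kclosed] kclosed_diff[OF I_kclosed] kclosed_add[OF I_kclosed]
             I_left I_right)
      show "st s \<in> ?W (m + k)" if hs: "s \<in> {starprod R xs | xs. weight_ok F k xs}" for s
      proof -
        obtain us where us: "s = starprod R us" "weight_ok F k us" using hs by blast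
        then obtain ws where "list_all2 (\<lambda>x n. 1 \<le> n \<and> x \<in> F n) us ws" "k \<le> sum_list ws" "us \<noteq> []"
          unfolding weight_ok_iff by blast
        then have w: "weight_ok F (m + k) (x # us)" unfolding weight_ok_iff
          using m1 by (intro conjI exI[of _ "m # ws"]) auto
        obtain u us' where "us = u # us'" using \<open>us \<noteq> []\<close> by (cases us) auto
        then have "st s = starprod R (x # us)" unfolding us(1) st_def by (simp add: Let_def)
        then show ?thesis using w
          by (auto intro!: set_plus_left[OF I_kclosed] kspan_base)
      qed
    qed
    obtain ws where ws: "list_all2 (\<lambda>x n. 1 \<le> n \<and> x \<in> F n) ys ws" "k \<le> sum_list ws"
      using ms k_def by blast
    have C: "fword [] * (fgen (R x) * fword ys - fword ys * fgen (R x)) \<in> ?W (m + k)"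
    proof (rule comm_lemma[OF W_kclosed _ brF RF[OF m1] m1(1) ws(1)])
      show "U_ideal scale br \<subseteq> ?W (m + k)" by (auto intro: set_plus_right[OF kspan_kclosed])
      show "list_all2 (\<lambda>x n. 1 \<le> n \<and> x \<in> F n) [] []" by simp
      fix zs' ws' assume h: "list_all2 (\<lambda>x n. 1 \<le> n \<and> x \<in> F n) zs' ws'"
        "length zs' = length [] + length ys" "m + sum_list [] + sum_list ws \<le> sum_list ws'" "zs' \<noteq> []"
      have "fword zs' \<in> ?W (sum_list ws')"
        using less.IH[of "length zs'" zs' ws'] h less.prems(1) unfolding xs by simp
      moreover have "m + k \<le> sum_list ws'" using h ws(2) by simp
      ultimately show "fword zs' \<in> ?W (m + k)" using W_mono by blast
    qed
    have "fword xs = st (fword ys) - fword [] * (fgen (R x) * fword ys - fword ys * fgen (R x))"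
      unfolding xs st_def fword_Cons fword_Nil by (simp add: algebra_simps)
    moreover have "sum_list ns = m + k" unfolding k_def ns by simp
    ultimately show ?thesis using kclosed_diff[OF W_kclosed S1 C] by simp
  qed
qed

lemma sp_sub: "kclosed V \<Longrightarrow> S \<subseteq> V \<Longrightarrow> J \<subseteq> V \<Longrightarrow> set_plus (kspan S) J \<subseteq> V"
  using kspan_sub[of V S] unfolding set_plus_def kclosed_def by blast

theorem corollary4p11:
  fixes scale :: "'k::field_char_0 \<Rightarrow> 'g::ab_group_add \<Rightarrow> 'g"
    and br :: "'g \<Rightarrow> 'g \<Rightarrow> 'g"
    and F :: "nat \<Rightarrow> 'g set"
    and R :: "'g \<Rightarrow> 'g"
  assumes "filtered_RB_lie_algebra scale br F R"
  shows "completion_U scale br F = completion_UR scale br F R"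
proof -
  have brF: "\<And>n m x y. 1 \<le> n \<Longrightarrow> 1 \<le> m \<Longrightarrow> x \<in> F n \<Longrightarrow> y \<in> F m \<Longrightarrow> br x y \<in> F (n+m)"
    using assms unfolding filtered_RB_lie_algebra_def lie_filtration_def by blast
  have RF: "\<And>n x. 1 \<le> n \<Longrightarrow> x \<in> F n \<Longrightarrow> R x \<in> F n"
    using assms unfolding filtered_RB_lie_algebra_def by blast
  let ?I = "U_ideal scale br"
  have eq: "set_plus (FU F n) ?I = set_plus (FUR R F n) ?I" for n
  proof (cases "n = 0")
    case True then show ?thesis by (simp add: FU_def FUR_def)
  next
    case False
    let ?W = "set_plus (kspan {fword xs | xs. weight_ok F n xs}) ?I :: ('g,'k) freealg set"
    let ?W' = "set_plus (kspan {starprod R xs | xs. weight_ok F n xs}) ?I :: ('g,'k) freealg set"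
    have 1: "?W \<subseteq> ?W'"
    proof (rule sp_sub[OF W_kclosed])
        show "?I \<subseteq> ?W'" by (auto intro: set_plus_right[OF kspan_kclosed])
        show "{fword xs | xs. weight_ok F n xs} \<subseteq> ?W'"
        proof
        fix s :: "('g,'k) freealg" assume hs: "s \<in> {fword xs | xs. weight_ok F n xs}"
          obtain us where us: "s = fword us" "weight_ok F n us" using hs by blast
          then obtain ws where ws: "list_all2 (\<lambda>x n. 1 \<le> n \<and> x \<in> F n) us ws" "n \<le> sum_list ws" "us \<noteq> []"
            unfolding weight_ok_iff by blast
          have "s \<in> set_plus (kspan {starprod R xs | xs. weight_ok F (sum_list ws) xs}) ?I"
            unfolding us(1) by (rule lemmaB[OF brF RF refl ws(1) ws(3)])
          then show "s \<in> ?W'" using W_mono[OF ws(2)] by blast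
        qed
    qed
    have 2: "?W' \<subseteq> ?W"
    proof (rule sp_sub[OF W_kclosed])
        show "?I \<subseteq> ?W" by (auto intro: set_plus_right[OF kspan_kclosed])
        show "{starprod R xs | xs. weight_ok F n xs} \<subseteq> ?W"
        proof
        fix s :: "('g,'k) freealg" assume hs: "s \<in> {starprod R xs | xs. weight_ok F n xs}"
          obtain us where us: "s = starprod R us" "weight_ok F n us" using hs by blast
          then obtain ws where ws: "list_all2 (\<lambda>x n. 1 \<le> n \<and> x \<in> F n) us ws" "n \<le> sum_list ws" "us \<noteq> []"
            unfolding weight_ok_iff by blast
          have "s \<in> set_plus (kspan {fword xs | xs. weight_ok F (sum_list ws) xs}) ?I"
            unfolding us(1) by (rule lemmaA[OF brF RF ws(1) ws(3)])
          then show "s \<in> ?W" using W_mono[OF ws(2)] by blast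
        qed
    qed
    show ?thesis using 1 2 False by (simp add: FU_def FUR_def)
  qed
  show ?thesis unfolding completion_U_def completion_UR_def using eq by simp
qed

end
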